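(* Let $k$ be a field, $k[x]$ a polynomial ring in one variable, $n\ge1$, $u_i,v_i\in k^*$, and let $p_1(x),\dots,p_n(x)\in k[x]\setminus\{0\}$ all have the same set of prime factors. Let $a_1,\dots,a_n,b_1,\dots,b_n$ be positive integers with $\gcd(a_i,b_1\cdots b_i)=1$ for each $i$, and define $$B_n=k[x][z_0,\dots,z_{n+1}]/\big(p_i(x)z_{i+1}+u_iz_i^{a_i}+v_iz_{i-1}^{b_i}\big)_{1\le i\le n},$$ where $z_0,\dots,z_{n+1}$ are indeterminates. If $p_i(x)\notin k$ and $a_i,b_i\ge2$ for all $i$, then the minimum number of generators of $B_n$ as a $k$-algebra is $n+3$. *)

theory Defs
  imports "HOL-Library.Poly_Mapping" "HOL-Computational_Algebra.Polynomial_Factorial"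
begin

type_synonym ('v, 'k) mpoly = "('v \<Rightarrow>\<^sub>0 nat) \<Rightarrow>\<^sub>0 'k"

definition mconst :: "'k::comm_ring_1 \<Rightarrow> ('v, 'k) mpoly" where
  "mconst c = Poly_Mapping.single 0 c"

definition mvar :: "'v \<Rightarrow> ('v, 'k::comm_ring_1) mpoly" where
  "mvar v = Poly_Mapping.single (Poly_Mapping.single v 1) 1"

datatype var = X | Z nat

definition poly_to_mpoly :: "'k::comm_ring_1 poly \<Rightarrow> (var, 'k) mpoly" where
  "poly_to_mpoly p = (\<Sum>i\<le>degree p. mconst (coeff p i) * mvar X ^ i)"

definition Bn_rel :: "(nat \<Rightarrow> 'k::comm_ring_1 poly) \<Rightarrow> (nat \<Rightarrow> 'k) \<Rightarrow> (nat \<Rightarrow> 'k)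
     \<Rightarrow> (nat \<Rightarrow> nat) \<Rightarrow> (nat \<Rightarrow> nat) \<Rightarrow> nat \<Rightarrow> (var, 'k) mpoly" where
  "Bn_rel p u v a b i = poly_to_mpoly (p i) * mvar (Z (Suc i))
        + mconst (u i) * mvar (Z i) ^ a i + mconst (v i) * mvar (Z (i - 1)) ^ b i"

inductive_set k_subalg :: "('v, 'k::comm_ring_1) mpoly set \<Rightarrow> ('v, 'k) mpoly set"
  for S where
    gen: "s \<in> S \<Longrightarrow> s \<in> k_subalg S"
  | const: "mconst c \<in> k_subalg S"
  | add: "f \<in> k_subalg S \<Longrightarrow> g \<in> k_subalg S \<Longrightarrow> f + g \<in> k_subalg S"
  | mult: "f \<in> k_subalg S \<Longrightarrow> g \<in> k_subalg S \<Longrightarrow> f * g \<in> k_subalg S"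

definition mvars :: "('v, 'k::zero) mpoly \<Rightarrow> 'v set" where
  "mvars f = (\<Union>m\<in>Poly_Mapping.keys f. Poly_Mapping.keys m)"

definition mpoly_ring :: "'v set \<Rightarrow> ('v, 'k::zero) mpoly set" where
  "mpoly_ring V = {f. mvars f \<subseteq> V}"

definition Bn_vars :: "nat \<Rightarrow> var set" where
  "Bn_vars n = insert X (Z ` {0..n+1})"

definition Bn_ideal :: "nat \<Rightarrow> (nat \<Rightarrow> 'k::comm_ring_1 poly) \<Rightarrow> (nat \<Rightarrow> 'k) \<Rightarrow> (nat \<Rightarrow> 'k)
     \<Rightarrow> (nat \<Rightarrow> nat) \<Rightarrow> (nat \<Rightarrow> nat) \<Rightarrow> (var, 'k) mpoly set" where
  "Bn_ideal n p u v a b =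
     {\<Sum>i=1..n. c i * Bn_rel p u v a b i | c. \<forall>i. c i \<in> mpoly_ring (Bn_vars n)}"

text \<open>Elements of the quotient algebra A/I (A = mpoly_ring V, I an ideal of A), given by
  representatives fs in A, generate A/I as a k-algebra: the k-subalgebra of A/I generated by
  their classes is all of A/I, i.e. every element of A is congruent modulo I to an element
  of the k-subalgebra generated by fs.\<close>
definition generates_quotient :: "'v set \<Rightarrow> ('v, 'k::comm_ring_1) mpoly set \<Rightarrow> ('v, 'k) mpoly list \<Rightarrow> bool" where
  "generates_quotient V I fs \<longleftrightarrow> set fs \<subseteq> mpoly_ring V \<and>
     (\<forall>g\<in>mpoly_ring V. \<exists>h \<in> k_subalg (set fs). g - h \<in> I)"

definition min_gens_quotient :: "'v set \<Rightarrow> ('v, 'k::comm_ring_1) mpoly set \<Rightarrow> nat" where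
  "min_gens_quotient V I = (LEAST m. \<exists>fs. length fs = m \<and> generates_quotient V I fs)"

end

theory Submission
  imports Defs "Jordan_Normal_Form.Determinant"
begin


definition mon :: "('v \<Rightarrow> 'a::comm_semiring_1) \<Rightarrow> ('v \<Rightarrow>\<^sub>0 nat) \<Rightarrow> 'a" where
  "mon \<sigma> m = (\<Prod>v\<in>Poly_Mapping.keys m. \<sigma> v ^ Poly_Mapping.lookup m v)"

definition cc :: "'k::comm_ring_1 \<Rightarrow> 'k poly poly" where "cc c = [:[:c:]:]"

definition ev :: "('v \<Rightarrow> 'k::comm_ring_1 poly poly) \<Rightarrow> ('v, 'k) mpoly \<Rightarrow> 'k poly poly" where
  "ev \<sigma> f = (\<Sum>m\<in>Poly_Mapping.keys f. cc (Poly_Mapping.lookup f m) * mon \<sigma> m)"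

lemma cc_simps[simp]: "cc 0 = 0" "cc 1 = 1" "cc (a + b) = cc a + cc b" "cc (a * b) = cc a * cc b"
  "cc (- a) = - cc a"
  by (simp_all add: cc_def one_pCons)

lemma mon_superset: assumes "finite A" "Poly_Mapping.keys m \<subseteq> A"
  shows "mon \<sigma> m = (\<Prod>v\<in>A. \<sigma> v ^ Poly_Mapping.lookup m v)"
  unfolding mon_def
  by (rule prod.mono_neutral_left[OF assms(1,2)]) (simp add: in_keys_iff)

lemma mon_add: "mon \<sigma> (m1 + m2) = mon \<sigma> m1 * mon \<sigma> m2"
proof -
  let ?A = "Poly_Mapping.keys m1 \<union> Poly_Mapping.keys m2"
  have "mon \<sigma> (m1 + m2) = (\<Prod>v\<in>?A. \<sigma> v ^ Poly_Mapping.lookup (m1 + m2) v)"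
    by (rule mon_superset) (auto simp: keys_add)
  also have "\<dots> = (\<Prod>v\<in>?A. \<sigma> v ^ Poly_Mapping.lookup m1 v) * (\<Prod>v\<in>?A. \<sigma> v ^ Poly_Mapping.lookup m2 v)"
    by (simp add: lookup_add power_add prod.distrib)
  also have "\<dots> = mon \<sigma> m1 * mon \<sigma> m2"
    by (subst (1 2) mon_superset[of ?A]) auto
  finally show ?thesis .
qed

lemma mon_zero[simp]: "mon \<sigma> 0 = 1" by (simp add: mon_def)
lemma mon_single[simp]: "mon \<sigma> (Poly_Mapping.single v 1) = \<sigma> v"
  unfolding mon_def by (simp del: One_nat_def)

lemma mon_single'[simp]: "mon \<sigma> (Poly_Mapping.single v (Suc 0)) = \<sigma> v"
  using mon_single[of \<sigma> v] by simp

lemma ev_superset: assumes "finite A" "Poly_Mapping.keys f \<subseteq> A"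
  shows "ev \<sigma> f = (\<Sum>m\<in>A. cc (Poly_Mapping.lookup f m) * mon \<sigma> m)"
  unfolding ev_def
  by (rule sum.mono_neutral_left[OF assms(1,2)]) (simp add: in_keys_iff)

lemma ev_add: "ev \<sigma> (f + g) = ev \<sigma> f + ev \<sigma> g"
proof -
  let ?A = "Poly_Mapping.keys f \<union> Poly_Mapping.keys g"
  have "ev \<sigma> (f + g) = (\<Sum>m\<in>?A. cc (Poly_Mapping.lookup (f + g) m) * mon \<sigma> m)"
    by (rule ev_superset) (auto simp: keys_add)
  also have "\<dots> = (\<Sum>m\<in>?A. cc (Poly_Mapping.lookup f m) * mon \<sigma> m) + (\<Sum>m\<in>?A. cc (Poly_Mapping.lookup g m) * mon \<sigma> m)"
    by (simp add: lookup_add distrib_right sum.distrib)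
  also have "\<dots> = ev \<sigma> f + ev \<sigma> g"
    by (subst (1 2) ev_superset[of ?A]) auto
  finally show ?thesis .
qed

lemma ev_zero[simp]: "ev \<sigma> 0 = 0" by (simp add: ev_def)

lemma ev_uminus: "ev \<sigma> (- f) = - ev \<sigma> f"
  unfolding ev_def by (simp add: sum_negf)

lemma ev_diff: "ev \<sigma> (f - g) = ev \<sigma> f - ev \<sigma> g"
  using ev_add[of \<sigma> f "- g"] by (simp add: ev_uminus)

lemma ev_sum: "ev \<sigma> (\<Sum>i\<in>I. F i) = (\<Sum>i\<in>I. ev \<sigma> (F i))"
  by (induction I rule: infinite_finite_induct) (simp_all add: ev_add)

lemma ev_single: "ev \<sigma> (Poly_Mapping.single m c) = cc c * mon \<sigma> m"
  by (simp add: ev_def)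

lemma expansion: "f = (\<Sum>m\<in>Poly_Mapping.keys f. Poly_Mapping.single m (Poly_Mapping.lookup f m))"
proof (rule poly_mapping_eqI)
  fix k
  show "Poly_Mapping.lookup f k = Poly_Mapping.lookup (\<Sum>m\<in>Poly_Mapping.keys f. Poly_Mapping.single m (Poly_Mapping.lookup f m)) k"
    by (simp add: lookup_sum lookup_single when_def in_keys_iff)
qed

lemma ev_mult: "ev \<sigma> (f * g) = ev \<sigma> f * ev \<sigma> g"
proof -
  have "f * g = (\<Sum>m\<in>Poly_Mapping.keys f. \<Sum>m'\<in>Poly_Mapping.keys g.
      Poly_Mapping.single m (Poly_Mapping.lookup f m) * Poly_Mapping.single m' (Poly_Mapping.lookup g m'))"
    by (subst (1 2) expansion) (simp add: sum_product)
  then have "ev \<sigma> (f * g) = (\<Sum>m\<in>Poly_Mapping.keys f. \<Sum>m'\<in>Poly_Mapping.keys g.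
      (cc (Poly_Mapping.lookup f m) * mon \<sigma> m) * (cc (Poly_Mapping.lookup g m') * mon \<sigma> m'))"
    by (simp add: ev_sum mult_single ev_single mon_add mult_ac)
  also have "\<dots> = ev \<sigma> f * ev \<sigma> g"
    by (simp add: ev_def sum_product)
  finally show ?thesis .
qed

lemma ev_one[simp]: "ev \<sigma> 1 = 1"
  using ev_single[of \<sigma> 0 1] by simp

lemma ev_power: "ev \<sigma> (f ^ k) = ev \<sigma> f ^ k"
  by (induction k) (simp_all add: ev_mult)

lemma ev_mconst[simp]: "ev \<sigma> (mconst c) = cc c"
  by (simp add: mconst_def ev_single)

lemma ev_mvar[simp]: "ev \<sigma> (mvar v) = \<sigma> v"
  by (simp add: mvar_def ev_single)

lemma ev_coeff0_cong:
  assumes "\<And>v. coeff (\<sigma> v) 0 = coeff (\<tau> v) 0"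
  shows "coeff (ev \<sigma> f) 0 = coeff (ev \<tau> f) 0"
proof -
  have h: "coeff (\<sigma> v) 0 = poly (\<sigma> v) 0" for \<sigma> :: "'a \<Rightarrow> 'b poly poly" and v
    by (simp add: poly_0_coeff_0)
  show ?thesis
    unfolding poly_0_coeff_0[symmetric] ev_def mon_def
    by (simp add: poly_sum poly_prod poly_mult poly_power h[symmetric] assms)
qed



definition sg :: "nat \<Rightarrow> var \<Rightarrow> 'k::comm_ring_1 poly poly" where
  "sg t v = (case v of X \<Rightarrow> [:[:0,1:], (if t = 0 then 1 else 0):]
                       | Z j \<Rightarrow> [:0, (if t = Suc j then 1 else 0):])"

definition TT :: "nat \<Rightarrow> (var, 'k::comm_ring_1) mpoly \<Rightarrow> 'k poly" where
  "TT t f = coeff (ev (sg t) f) 1"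

definition VV :: "(var, 'k::comm_ring_1) mpoly \<Rightarrow> 'k poly" where
  "VV f = coeff (ev (sg 0) f) 0"

lemma coeff_mult_1: "coeff (p * q) (Suc 0) = coeff p 0 * coeff q (Suc 0) + coeff p (Suc 0) * coeff q 0"
  by (simp add: coeff_mult numeral_eq_Suc)

lemma VV_indep: "coeff (ev (sg t) f) 0 = VV f"
  unfolding VV_def by (rule ev_coeff0_cong) (simp add: sg_def split: var.splits)

lemma TT_mult: "TT t (f * g) = VV f * TT t g + VV g * TT t f"
  unfolding TT_def by (simp add: ev_mult coeff_mult_1 VV_indep mult_ac)

lemma VV_mult: "VV (f * g) = VV f * VV g"
  unfolding VV_def by (simp add: ev_mult coeff_mult_0)

lemma TT_add: "TT t (f + g) = TT t f + TT t g"
  unfolding TT_def by (simp add: ev_add)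

lemma TT_diff: "TT t (f - g) = TT t f - TT t g"
  unfolding TT_def by (simp add: ev_diff)

lemma TT_sum: "TT t (\<Sum>i\<in>I. F i) = (\<Sum>i\<in>I. TT t (F i))"
  unfolding TT_def by (simp add: ev_sum coeff_sum)

lemma TT_mconst[simp]: "TT t (mconst c) = 0"
  unfolding TT_def by (simp add: cc_def)

lemma TT_mvar_X[simp]: "TT t (mvar X) = (if t = 0 then 1 else 0)"
  unfolding TT_def by (simp add: sg_def)

lemma TT_mvar_Z[simp]: "TT t (mvar (Z j)) = (if t = Suc j then 1 else 0)"
  unfolding TT_def by (simp add: sg_def)

lemma coeff_power_ge2:
  assumes "coeff (y::'a::comm_ring_1 poly) 0 = 0" "a \<ge> 2"
  shows "coeff (y ^ a) 0 = 0" "coeff (y ^ a) (Suc 0) = 0"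
proof -
  obtain k where k: "a = Suc (Suc k)" using assms(2) by (metis add_2_eq_Suc le_Suc_ex)
  show "coeff (y ^ a) 0 = 0" "coeff (y ^ a) (Suc 0) = 0"
    unfolding k by (simp_all add: coeff_mult_1 coeff_mult_0 assms(1))
qed

lemma VV_poly_to_mpoly: "VV (poly_to_mpoly (p::'k::comm_ring_1 poly)) = p"
proof -
  have "VV (poly_to_mpoly p) = (\<Sum>i\<le>degree p. [:coeff p i:] * [:0,1:] ^ i)"
    unfolding VV_def poly_to_mpoly_def
    by (simp add: ev_sum coeff_sum ev_mult ev_power coeff_mult_0 coeff_0_power cc_def sg_def)
  also have "\<dots> = (\<Sum>i\<le>degree p. monom (coeff p i) i)"
    by (simp add: monom_altdef)
  finally show ?thesis by (simp add: poly_as_sum_of_monoms)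
qed

lemma rel_props:
  assumes "a i \<ge> 2" "b i \<ge> 2"
  shows "VV (Bn_rel p u v a b i) = 0"
    "TT t (Bn_rel p u v a b i) = (if t = Suc (Suc i) then p i else 0)"
proof -
  have c0: "coeff (sg t (Z j)) 0 = 0" for t j by (simp add: sg_def)
  have c1: "coeff (sg t (Z j)) (Suc 0) = (if t = Suc j then 1 else 0)" for t j by (simp add: sg_def)
  note pw = coeff_power_ge2[OF c0]
  have P0: "coeff (ev (sg t) (poly_to_mpoly p')) 0 = p'" for t and p' :: "'a poly"
    using VV_poly_to_mpoly[of p'] by (simp add: VV_indep)
  show "VV (Bn_rel p u v a b i) = 0"
    unfolding VV_def Bn_rel_def
    by (simp add: ev_add ev_mult ev_power coeff_mult_0 c0 pw assms)
  show "TT t (Bn_rel p u v a b i) = (if t = Suc (Suc i) then p i else 0)"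
    unfolding TT_def Bn_rel_def
    by (simp add: ev_add ev_mult ev_power coeff_mult_1 coeff_mult_0 c0 c1 pw assms P0 cc_def)
qed



lemma subalg_T:
  assumes "h \<in> k_subalg (set fs)"
  shows "\<exists>c. \<forall>t. q dvd (TT t h - (\<Sum>j<length fs. c j * TT t (fs!j)))"
  using assms
proof (induction rule: k_subalg.induct)
  case (gen s)
  then obtain j0 where j0: "j0 < length fs" "s = fs ! j0" by (auto simp: in_set_conv_nth)
  show ?case
  proof (rule exI[of _ "\<lambda>j. if j = j0 then 1 else 0"], intro allI)
    fix t
    have "(\<Sum>j<length fs. (if j = j0 then 1 else 0) * TT t (fs!j)) = (\<Sum>j<length fs. if j = j0 then TT t (fs!j) else 0)"
      by (rule sum.cong) auto
    also have "\<dots> = TT t s" using j0 by (simp add: sum.delta)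
    finally show "q dvd (TT t s - (\<Sum>j<length fs. (if j = j0 then 1 else 0) * TT t (fs!j)))" by simp
  qed
next
  case (const c)
  show ?case by (rule exI[of _ "\<lambda>j. 0"]) simp
next
  case (add f g)
  then obtain cf cg where cf: "\<forall>t. q dvd (TT t f - (\<Sum>j<length fs. cf j * TT t (fs!j)))"
    and cg: "\<forall>t. q dvd (TT t g - (\<Sum>j<length fs. cg j * TT t (fs!j)))" by blast
  show ?case
  proof (rule exI[of _ "\<lambda>j. cf j + cg j"], intro allI)
    fix t
    have "TT t (f + g) - (\<Sum>j<length fs. (cf j + cg j) * TT t (fs!j)) =
      (TT t f - (\<Sum>j<length fs. cf j * TT t (fs!j))) + (TT t g - (\<Sum>j<length fs. cg j * TT t (fs!j)))"
      by (simp add: TT_add distrib_right sum.distrib)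
    then show "q dvd (TT t (f + g) - (\<Sum>j<length fs. (cf j + cg j) * TT t (fs!j)))"
      using cf cg by simp
  qed
next
  case (mult f g)
  then obtain cf cg where cf: "\<forall>t. q dvd (TT t f - (\<Sum>j<length fs. cf j * TT t (fs!j)))"
    and cg: "\<forall>t. q dvd (TT t g - (\<Sum>j<length fs. cg j * TT t (fs!j)))" by blast
  show ?case
  proof (rule exI[of _ "\<lambda>j. VV f * cg j + VV g * cf j"], intro allI)
    fix t
    have "TT t (f * g) - (\<Sum>j<length fs. (VV f * cg j + VV g * cf j) * TT t (fs!j)) =
      VV g * (TT t f - (\<Sum>j<length fs. cf j * TT t (fs!j))) + VV f * (TT t g - (\<Sum>j<length fs. cg j * TT t (fs!j)))"
    proof -
      have "(\<Sum>j<length fs. (VV f * cg j + VV g * cf j) * TT t (fs!j)) =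
          VV f * (\<Sum>j<length fs. cg j * TT t (fs!j)) + VV g * (\<Sum>j<length fs. cf j * TT t (fs!j))"
        by (simp add: sum_distrib_left sum.distrib algebra_simps)
      then show ?thesis by (simp add: TT_mult algebra_simps)
    qed
    then show "q dvd (TT t (f * g) - (\<Sum>j<length fs. (VV f * cg j + VV g * cf j) * TT t (fs!j)))"
      using cf cg by simp
  qed
qed

lemma ideal_T:
  assumes "g \<in> Bn_ideal n p u v a b" "\<forall>i\<in>{1..n}. q dvd p i" "\<forall>i\<in>{1..n}. a i \<ge> 2 \<and> b i \<ge> 2"
  shows "q dvd TT t g"
proof -
  obtain c where g: "g = (\<Sum>i=1..n. c i * Bn_rel p u v a b i)"
    using assms(1) unfolding Bn_ideal_def by blast
  show ?thesis unfolding g TT_sum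
    by (rule dvd_sum) (use assms(2,3) in \<open>auto simp: TT_mult rel_props\<close>)
qed

lemma prod_diff_dvd:
  fixes f g :: "'b \<Rightarrow> 'a::comm_ring_1"
  shows "(\<And>i. i \<in> I \<Longrightarrow> q dvd (f i - g i)) \<Longrightarrow> q dvd (prod f I - prod g I)"
proof (induction I rule: infinite_finite_induct)
  case (insert x F)
  have "prod f (insert x F) - prod g (insert x F) = f x * (prod f F - prod g F) + (f x - g x) * prod g F"
    using insert.hyps by (simp add: algebra_simps)
  then show ?case using insert by simp
qed auto

lemma det_cong:
  assumes A: "A \<in> carrier_mat m m" and B: "B \<in> carrier_mat m m"
    and d: "\<And>i j. i < m \<Longrightarrow> j < m \<Longrightarrow> q dvd (A $$ (i,j) - B $$ (i,j))"
  shows "q dvd (det A - det B)"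
proof -
  have "det A - det B = (\<Sum>p\<in>{p. p permutes {0..<m}}. signof p * ((\<Prod>i = 0..<m. A $$ (i, p i)) - (\<Prod>i = 0..<m. B $$ (i, p i))))"
    unfolding det_def'[OF A] det_def'[OF B] by (simp add: sum_subtractf right_diff_distrib)
  also have "q dvd \<dots>"
  proof (rule dvd_sum)
    fix p assume "p \<in> {p. p permutes {0..<m}}"
    then have "p i < m" if "i < m" for i using that permutes_in_image by fastforce
    then show "q dvd signof p * ((\<Prod>i = 0..<m. A $$ (i, p i)) - (\<Prod>i = 0..<m. B $$ (i, p i)))"
      by (intro dvd_mult prod_diff_dvd d) auto
  qed
  finally show ?thesis .
qed

lemma no_small:
  fixes C F :: "nat \<Rightarrow> nat \<Rightarrow> 'a::comm_ring_1"
  assumes "\<not> q dvd 1" "N < M"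
    and d: "\<And>s t. s < M \<Longrightarrow> t < M \<Longrightarrow> q dvd ((if s = t then 1 else 0) - (\<Sum>j<N. C s j * F j t))"
  shows False
proof -
  define A where "A = mat M M (\<lambda>(s,j). if j < N then C s j else 0)"
  define B where "B = mat M M (\<lambda>(j,t). if j < N then F j t else 0)"
  have AC: "A \<in> carrier_mat M M" and BC: "B \<in> carrier_mat M M" by (auto simp: A_def B_def)
  have AB: "(A * B) $$ (s,t) = (\<Sum>j<N. C s j * F j t)" if "s < M" "t < M" for s t
  proof -
    have "(A * B) $$ (s,t) = (\<Sum>j\<in>{0..<M}. (if j < N then C s j else 0) * (if j < N then F j t else 0))"
      using that AC BC by (simp add: A_def B_def scalar_prod_def)
    also have "\<dots> = (\<Sum>j\<in>{0..<N}. C s j * F j t)"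
      by (rule sum.mono_neutral_cong_right) (use assms(2) in auto)
    finally show ?thesis by (simp add: atLeast0LessThan)
  qed
  have "det B = 0"
  proof -
    have "(\<Prod>i = 0..<M. B $$ (i, p i)) = 0" if "p permutes {0..<M}" for p
    proof -
      have "p N < M" using that assms(2) permutes_in_image by fastforce
      then have "B $$ (N, p N) = 0" using assms(2) by (simp add: B_def)
      then show ?thesis using assms(2) by (intro prod_zero) auto
    qed
    then show ?thesis unfolding det_def'[OF BC] by simp
  qed
  then have "det (A * B) = 0" by (simp add: det_mult[OF AC BC])
  moreover have "q dvd (det (1\<^sub>m M) - det (A * B))"
    by (rule det_cong) (use AC BC AB d in auto)
  ultimately have "q dvd 1" by simp
  with assms(1) show False by simp
qed



lemma subalg_sum: "(\<And>i. i \<in> I \<Longrightarrow> F i \<in> k_subalg S) \<Longrightarrow> (\<Sum>i\<in>I. F i) \<in> k_subalg S"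
proof (induction I rule: infinite_finite_induct)
  case (infinite A) then show ?case using k_subalg.const[of 0 S] by (simp add: mconst_def)
next
  case empty then show ?case using k_subalg.const[of 0 S] by (simp add: mconst_def)
next
  case (insert x F) then show ?case by (simp add: k_subalg.add)
qed

lemma subalg_one: "1 \<in> k_subalg S"
  using k_subalg.const[of 1 S] by (simp add: mconst_def)

lemma subalg_prod: "(\<And>i. i \<in> I \<Longrightarrow> F i \<in> k_subalg S) \<Longrightarrow> (\<Prod>i\<in>I. F i) \<in> k_subalg S"
  by (induction I rule: infinite_finite_induct) (simp_all add: subalg_one k_subalg.mult)

lemma subalg_power: "f \<in> k_subalg S \<Longrightarrow> f ^ e \<in> k_subalg S"
  by (induction e) (simp_all add: subalg_one k_subalg.mult)

lemma mvar_power: "(mvar v :: ('v,'k::comm_ring_1) mpoly) ^ e = Poly_Mapping.single (Poly_Mapping.single v e) 1"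
  by (induction e) (simp_all add: mvar_def mult_single single_add[symmetric] add.commute)

lemma single_prod: "(\<Prod>v\<in>A. Poly_Mapping.single (g v) (1::'k::comm_ring_1)) = Poly_Mapping.single (\<Sum>v\<in>A. g v) 1"
  by (induction A rule: infinite_finite_induct) (simp_all add: mult_single)

lemma mvars_mvar: "mvars (mvar v :: ('v,'k::comm_ring_1) mpoly) = {v}"
  by (simp add: mvars_def mvar_def)

lemma in_subalg:
  assumes "f \<in> mpoly_ring V"
  shows "(f :: ('v,'k::comm_ring_1) mpoly) \<in> k_subalg (mvar ` V)"
proof -
  have "Poly_Mapping.single m (Poly_Mapping.lookup f m) \<in> k_subalg (mvar ` V)" if m: "m \<in> Poly_Mapping.keys f" for m
  proof -
    have kV: "Poly_Mapping.keys m \<subseteq> V" using assms m by (auto simp: mpoly_ring_def mvars_def)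
    have "Poly_Mapping.single m (1::'k) = (\<Prod>v\<in>Poly_Mapping.keys m. mvar v ^ Poly_Mapping.lookup m v)"
      by (simp add: mvar_power single_prod expansion[symmetric])
    also have "\<dots> \<in> k_subalg (mvar ` V)"
      using kV by (intro subalg_prod subalg_power k_subalg.gen) auto
    finally have "mconst (Poly_Mapping.lookup f m) * Poly_Mapping.single m 1 \<in> k_subalg (mvar ` V)"
      by (intro k_subalg.mult k_subalg.const)
    then show ?thesis by (simp add: mconst_def mult_single)
  qed
  then have "(\<Sum>m\<in>Poly_Mapping.keys f. Poly_Mapping.single m (Poly_Mapping.lookup f m)) \<in> k_subalg (mvar ` V)"
    by (intro subalg_sum)
  then show ?thesis by (simp add: expansion[symmetric])
qed

lemma zero_in_ideal: "0 \<in> Bn_ideal n p u v a b"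
  unfolding Bn_ideal_def
  by (rule CollectI, rule exI[of _ "\<lambda>_. 0"]) (simp add: mpoly_ring_def mvars_def)

lemma upper:
  "generates_quotient (Bn_vars n) (Bn_ideal n p u v a b) (mvar X # map (\<lambda>j. mvar (Z j)) [0..<n+2])"
proof -
  have S: "set (mvar X # map (\<lambda>j. mvar (Z j)) [0..<n+2]) = mvar ` Bn_vars n"
  proof -
    have e: "{0..<n+2} = {0..n+1}" by auto
    show ?thesis by (simp only: list.set set_map set_upt Bn_vars_def image_insert image_image e)
  qed
  show ?thesis unfolding generates_quotient_def S
  proof (intro conjI ballI)
    show "mvar ` Bn_vars n \<subseteq> mpoly_ring (Bn_vars n)"
      by (auto simp: mpoly_ring_def mvars_mvar)
    fix g :: "(var, 'a) mpoly" assume "g \<in> mpoly_ring (Bn_vars n)"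
    then show "\<exists>h\<in>k_subalg (mvar ` Bn_vars n). g - h \<in> Bn_ideal n p u v a b"
      using in_subalg zero_in_ideal by (metis diff_self)
  qed
qed

lemma lower:
  fixes p :: "nat \<Rightarrow> 'k::field poly"
  assumes gen: "generates_quotient (Bn_vars n) (Bn_ideal n p u v a b) fs"
    and q: "\<not> q dvd 1" "\<forall>i\<in>{1..n}. q dvd p i"
    and ab: "\<forall>i\<in>{1..n}. a i \<ge> 2 \<and> b i \<ge> 2"
  shows "n + 3 \<le> length fs"
proof (rule ccontr)
  assume small: "\<not> n + 3 \<le> length fs"
  define M where "M = n + 3"
  define vr where "vr s = (if s = 0 then X else Z (s - 1))" for s
  have vrT: "TT t (mvar (vr s)) = (if s = t then 1 else 0)" for s t
    by (cases s) (auto simp: vr_def)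
  have "\<exists>c. \<forall>t. q dvd ((if s = t then 1 else 0) - (\<Sum>j<length fs. c j * TT t (fs!j)))" if s: "s < M" for s
  proof -
    have "vr s \<in> Bn_vars n" using s by (auto simp: vr_def Bn_vars_def M_def)
    then have "mvar (vr s) \<in> mpoly_ring (Bn_vars n)" by (simp add: mpoly_ring_def mvars_mvar)
    with gen obtain h where h: "h \<in> k_subalg (set fs)" "mvar (vr s) - h \<in> Bn_ideal n p u v a b"
      unfolding generates_quotient_def by blast
    obtain c where c: "\<forall>t. q dvd (TT t h - (\<Sum>j<length fs. c j * TT t (fs!j)))"
      using subalg_T[OF h(1)] by blast
    show ?thesis
    proof (rule exI[of _ c], intro allI)
      fix t
      have "q dvd TT t (mvar (vr s) - h)" by (rule ideal_T[OF h(2) q(2) ab])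
      then have "q dvd (TT t (mvar (vr s)) - TT t h) + (TT t h - (\<Sum>j<length fs. c j * TT t (fs!j)))"
        using c by (intro dvd_add) (simp_all add: TT_diff)
      then show "q dvd ((if s = t then 1 else 0) - (\<Sum>j<length fs. c j * TT t (fs!j)))"
        by (simp add: vrT)
    qed
  qed
  then obtain C where C: "\<And>s t. s < M \<Longrightarrow> q dvd ((if s = t then 1 else 0) - (\<Sum>j<length fs. C s j * TT t (fs!j)))"
    by metis
  show False
    by (rule no_small[OF q(1), of "length fs" M C "\<lambda>j t. TT t (fs!j)"]) (use small C in \<open>auto simp: M_def\<close>)
qed

theorem proposition4p3:
  fixes n :: nat and u v :: "nat \<Rightarrow> 'k::field_gcd" and p :: "nat \<Rightarrow> 'k poly" and a b :: "nat \<Rightarrow> nat"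
  assumes "n \<ge> 1"
    and "\<forall>i\<in>{1..n}. u i \<noteq> 0 \<and> v i \<noteq> 0"
    and "\<forall>i\<in>{1..n}. p i \<noteq> 0"
    and "\<forall>i\<in>{1..n}. \<forall>j\<in>{1..n}. prime_factors (p i) = prime_factors (p j)"
    and "\<forall>i\<in>{1..n}. a i > 0 \<and> b i > 0"
    and "\<forall>i\<in>{1..n}. gcd (a i) (\<Prod>j=1..i. b j) = 1"
    and "\<forall>i\<in>{1..n}. degree (p i) > 0"
    and "\<forall>i\<in>{1..n}. a i \<ge> 2 \<and> b i \<ge> 2"
  shows "min_gens_quotient (Bn_vars n) (Bn_ideal n p u v a b) = n + 3"
proof -
  have one: "1 \<in> {1..n}" using assms(1) by simp
  have "p 1 \<noteq> 0" "\<not> is_unit (p 1)"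
    using assms(3,7) one by (auto simp: is_unit_iff_degree)
  then obtain q where q: "q dvd p 1" "prime q" using prime_divisor_exists by blast
  then have qin: "q \<in> prime_factors (p 1)" using \<open>p 1 \<noteq> 0\<close> by (simp add: in_prime_factors_iff)
  have qdvd: "\<forall>i\<in>{1..n}. q dvd p i"
  proof
    fix i assume i: "i \<in> {1..n}"
    then have "q \<in> prime_factors (p i)" using assms(4) one qin by metis
    then show "q dvd p i" by (simp add: in_prime_factors_iff)
  qed
  have nu: "\<not> q dvd 1" using q(2) by (simp add: not_prime_unit)
  show ?thesis
    unfolding min_gens_quotient_def
  proof (rule Least_equality)
    show "\<exists>fs. length fs = n + 3 \<and> generates_quotient (Bn_vars n) (Bn_ideal n p u v a b) fs"
      by (rule exI[of _ "mvar X # map (\<lambda>j. mvar (Z j)) [0..<n+2]"]) (simp only: upper length_Cons length_map length_upt, simp)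
    fix y assume "\<exists>fs. length fs = y \<and> generates_quotient (Bn_vars n) (Bn_ideal n p u v a b) fs"
    then show "n + 3 \<le> y" using lower[OF _ nu qdvd assms(8)] by blast
  qed
qed

end
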